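(* Let $\mathscr{H}$ be the class of all (finite, simple) graphs $G$ on at least twelve vertices with $\gamma(G)=2$. Then $\mathscr{H}$ is recognizable: if $G\in\mathscr{H}$ and $H$ is any graph with $\mathscr{D}(H)=\mathscr{D}(G)$, then $H\in\mathscr{H}$.
   Context: All graphs are finite, simple and undirected. $\gamma(G)$ is the domination number of $G$ (the minimum size of a set $S\subseteq V(G)$ such that every vertex outside $S$ has a neighbour in $S$). For a vertex $v$, the card $G-v$ is the unlabeled graph obtained by deleting $v$ and its incident edges; the deck $\mathscr{D}(G)$ is the multiset of all cards of $G$ (up to isomorphism). A graph $H$ with $\mathscr{D}(H)=\mathscr{D}(G)$ is a reconstruction of $G$. A class $\mathcal{F}$ of graphs is recognizable if every reconstruction of every graph in $\mathcal{F}$ also lies in $\mathcal{F}$. *)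

theory Defs
  imports Main
begin

text \<open>A finite simple graph is a pair (V, E) of a finite vertex set and a set of
  2-element subsets of V (the edges).\<close>
type_synonym 'a graph = "'a set \<times> 'a set set"

definition simple_graph :: "'a graph \<Rightarrow> bool" where
  "simple_graph G \<longleftrightarrow> finite (fst G) \<and>
     (\<forall>e\<in>snd G. \<exists>u v. u \<noteq> v \<and> u \<in> fst G \<and> v \<in> fst G \<and> e = {u, v})"

definition dominating_set :: "'a graph \<Rightarrow> 'a set \<Rightarrow> bool" where
  "dominating_set G S \<longleftrightarrow> S \<subseteq> fst G \<and>
     (\<forall>v \<in> fst G - S. \<exists>u \<in> S. {u, v} \<in> snd G)"

definition domination_number :: "'a graph \<Rightarrow> nat" where
  "domination_number G = (LEAST k. \<exists>S. dominating_set G S \<and> card S = k)"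

definition delete_vertex :: "'a graph \<Rightarrow> 'a \<Rightarrow> 'a graph" where
  "delete_vertex G v = (fst G - {v}, {e \<in> snd G. v \<notin> e})"

definition graph_iso :: "'a graph \<Rightarrow> 'b graph \<Rightarrow> bool" where
  "graph_iso G H \<longleftrightarrow> (\<exists>f. bij_betw f (fst G) (fst H) \<and>
     (\<forall>u\<in>fst G. \<forall>w\<in>fst G. {u, w} \<in> snd G \<longleftrightarrow> {f u, f w} \<in> snd H))"

text \<open>Equality of decks (multisets of cards up to isomorphism): there is a bijection
  between the vertex sets matching each card of G with an isomorphic card of H.\<close>
definition same_deck :: "'a graph \<Rightarrow> 'b graph \<Rightarrow> bool" where
  "same_deck G H \<longleftrightarrow> (\<exists>g. bij_betw g (fst G) (fst H) \<and>
     (\<forall>v\<in>fst G. graph_iso (delete_vertex G v) (delete_vertex H (g v))))"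

definition in_class_H :: "'a graph \<Rightarrow> bool" where
  "in_class_H G \<longleftrightarrow> simple_graph G \<and> card (fst G) \<ge> 12 \<and> domination_number G = 2"

end

theory Submission
  imports Defs
begin

definition undom :: "'a graph \<Rightarrow> 'a set \<Rightarrow> 'a set" where
  "undom F S = {v \<in> fst F - S. \<forall>x\<in>S. {x,v} \<notin> snd F}"

definition cnt :: "nat \<Rightarrow> nat \<Rightarrow> 'a graph \<Rightarrow> nat" where
  "cnt s j F = card {S. S \<subseteq> fst F \<and> card S = s \<and> card (undom F S) = j}"

lemma undom_sub: "undom F S \<subseteq> fst F - S" by (auto simp: undom_def)

lemma undom_delete: assumes "w \<notin> S" shows "undom (delete_vertex F w) S = undom F S - {w}"
  using assms by (auto simp: undom_def delete_vertex_def)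

lemma cnt_le: assumes "finite (fst F)" shows "cnt s j F \<le> card (fst F) choose s"
  unfolding cnt_def n_subsets[OF assms, symmetric]
  by (rule card_mono) (auto intro: finite_subset[of _ "Pow (fst F)"] simp: assms)

lemma sum_if_const: "finite A \<Longrightarrow> (\<Sum>x\<in>A. if P x then c else (0::nat)) = c * card {x\<in>A. P x}"
  by (simp add: sum.inter_filter[symmetric])

lemma kelly:
  assumes fin: "finite (fst F)"
  shows "(\<Sum>w\<in>fst F. cnt s j (delete_vertex F w)) = (card (fst F) - s - j) * cnt s j F + (j+1) * cnt s (Suc j) F"
proof -
  define V where "V = fst F"
  define Ss where "Ss = {S. S \<subseteq> V \<and> card S = s}"
  have finV: "finite V" using fin V_def by simp
  have finSs: "finite Ss" using finV unfolding Ss_def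
    by (auto intro: finite_subset[of _ "Pow V"])
  have step1: "cnt s j (delete_vertex F w) = (\<Sum>S\<in>Ss. if w \<notin> S \<and> card (undom F S - {w}) = j then 1 else 0)" for w
  proof -
    have "{S. S \<subseteq> fst (delete_vertex F w) \<and> card S = s \<and> card (undom (delete_vertex F w) S) = j}
        = {S\<in>Ss. w \<notin> S \<and> card (undom F S - {w}) = j}"
    proof -
      have fd: "fst (delete_vertex F w) = fst F - {w}" by (simp add: delete_vertex_def)
      show ?thesis unfolding fd Ss_def V_def
      proof (intro equalityI subsetI)
        fix S assume a: "S \<in> {S. S \<subseteq> fst F - {w} \<and> card S = s \<and> card (undom (delete_vertex F w) S) = j}"
        then have "w \<notin> S" by auto
        then show "S \<in> {S \<in> {S. S \<subseteq> fst F \<and> card S = s}. w \<notin> S \<and> card (undom F S - {w}) = j}"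
          using undom_delete[of w S F] a by auto
      next
        fix S assume "S \<in> {S \<in> {S. S \<subseteq> fst F \<and> card S = s}. w \<notin> S \<and> card (undom F S - {w}) = j}"
        then show "S \<in> {S. S \<subseteq> fst F - {w} \<and> card S = s \<and> card (undom (delete_vertex F w) S) = j}"
          using undom_delete[of w S F] by auto
      qed
    qed
    then show ?thesis unfolding cnt_def using finSs sum_if_const[OF finSs, of _ 1] by simp
  qed
  have step2: "(\<Sum>w\<in>V. if w \<notin> S \<and> card (undom F S - {w}) = j then 1 else 0)
     = (if card (undom F S) = j then card V - s - j else 0) + (if card (undom F S) = Suc j then Suc j else 0)"
    if "S \<in> Ss" for S
  proof -
    let ?U = "undom F S"
    have U: "?U \<subseteq> V - S" using undom_sub V_def by metis
    have SV: "S \<subseteq> V" "card S = s" using that Ss_def by auto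
    have finU: "finite ?U" using U finV finite_subset by blast
    have e: "(\<Sum>w\<in>V. if w \<notin> S \<and> card (?U - {w}) = j then 1 else 0) = card {w\<in>V. w \<notin> S \<and> card (?U - {w}) = j}"
      using sum_if_const[OF finV, of _ 1] by simp
    show ?thesis
    proof (cases "card ?U = j")
      case True
      have "{w\<in>V. w \<notin> S \<and> card (?U - {w}) = j} = V - S - ?U"
      proof (intro equalityI subsetI)
        fix w assume w: "w \<in> {w\<in>V. w \<notin> S \<and> card (?U - {w}) = j}"
        have "w \<notin> ?U"
        proof
          assume "w \<in> ?U"
          then have "card (?U - {w}) = card ?U - 1" "card ?U \<ge> 1" using finU
            by (auto simp: card_gt_0_iff Suc_le_eq)
          then show False using w True by auto
        qed
        then show "w \<in> V - S - ?U" using w by auto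
      next
        fix w assume "w \<in> V - S - ?U"
        then show "w \<in> {w\<in>V. w \<notin> S \<and> card (?U - {w}) = j}" using True by auto
      qed
      moreover have "card (V - S - ?U) = card V - s - j"
      proof -
        have "card (V - S - ?U) = card (V - S) - card ?U" using U finV by (simp add: card_Diff_subset finU)
        moreover have "card (V - S) = card V - card S" using SV finV by (simp add: card_Diff_subset finite_subset)
        ultimately show ?thesis using True SV by simp
      qed
      ultimately show ?thesis using e True by simp
    next
      case False
      show ?thesis
      proof (cases "card ?U = Suc j")
        case True
        have "{w\<in>V. w \<notin> S \<and> card (?U - {w}) = j} = ?U"
        proof (intro equalityI subsetI)
          fix w assume w: "w \<in> {w\<in>V. w \<notin> S \<and> card (?U - {w}) = j}"
          show "w \<in> ?U"
          proof (rule ccontr)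
            assume "w \<notin> ?U" then have "?U - {w} = ?U" by auto
            then show False using w True by auto
          qed
        next
          fix w assume "w \<in> ?U"
          then show "w \<in> {w\<in>V. w \<notin> S \<and> card (?U - {w}) = j}" using True U finU by auto
        qed
        then show ?thesis using e True by simp
      next
        case False2: False
        have "{w\<in>V. w \<notin> S \<and> card (?U - {w}) = j} = {}"
        proof (intro equalityI subsetI)
          fix w assume w: "w \<in> {w\<in>V. w \<notin> S \<and> card (?U - {w}) = j}"
          show "w \<in> {}"
          proof (cases "w \<in> ?U")
            case True
            then have "card (?U - {w}) = card ?U - 1" "card ?U \<ge> 1" using finU
              by (auto simp: card_gt_0_iff Suc_le_eq)
            then show ?thesis using w False2 by auto
          next
            case False3: False
            then have "?U - {w} = ?U" by auto
            then show ?thesis using w False by auto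
          qed
        qed simp
        then show ?thesis using e False False2 by (simp del: Collect_empty_eq)
      qed
    qed
  qed
  have "(\<Sum>w\<in>fst F. cnt s j (delete_vertex F w))
      = (\<Sum>w\<in>V. \<Sum>S\<in>Ss. if w \<notin> S \<and> card (undom F S - {w}) = j then 1 else 0)"
    using step1 V_def by simp
  also have "\<dots> = (\<Sum>S\<in>Ss. \<Sum>w\<in>V. if w \<notin> S \<and> card (undom F S - {w}) = j then 1 else 0)"
    by (rule sum.swap)
  also have "\<dots> = (\<Sum>S\<in>Ss. (if card (undom F S) = j then card V - s - j else 0) + (if card (undom F S) = Suc j then Suc j else 0))"
    using step2 by (rule sum.cong[OF refl])
  also have "\<dots> = (card V - s - j) * card {S\<in>Ss. card (undom F S) = j} + Suc j * card {S\<in>Ss. card (undom F S) = Suc j}"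
    by (simp add: sum.distrib sum_if_const[OF finSs])
  also have "{S\<in>Ss. card (undom F S) = j} = {S. S \<subseteq> fst F \<and> card S = s \<and> card (undom F S) = j}"
    by (auto simp: Ss_def V_def)
  also have "{S\<in>Ss. card (undom F S) = Suc j} = {S. S \<subseteq> fst F \<and> card S = s \<and> card (undom F S) = Suc j}"
    by (auto simp: Ss_def V_def)
  finally show ?thesis unfolding cnt_def V_def by simp
qed


lemma undom_iso:
  assumes f: "bij_betw f (fst F) (fst F')"
    and e: "\<forall>u\<in>fst F. \<forall>w\<in>fst F. {u, w} \<in> snd F \<longleftrightarrow> {f u, f w} \<in> snd F'"
    and S: "S \<subseteq> fst F"
  shows "undom F' (f ` S) = f ` undom F S"
proof (intro equalityI subsetI)
  fix v' assume v': "v' \<in> undom F' (f ` S)"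
  then have "v' \<in> fst F'" by (auto simp: undom_def)
  then obtain v where v: "v \<in> fst F" "v' = f v" using f by (auto simp: bij_betw_def)
  have "v \<notin> S" using v v' by (auto simp: undom_def)
  moreover have "\<forall>x\<in>S. {x,v} \<notin> snd F" using v v' e S by (auto simp: undom_def)
  ultimately show "v' \<in> f ` undom F S" using v by (auto simp: undom_def)
next
  fix v' assume "v' \<in> f ` undom F S"
  then obtain v where v: "v \<in> undom F S" "v' = f v" by auto
  have vV: "v \<in> fst F" "v \<notin> S" using v by (auto simp: undom_def)
  have "f v \<notin> f ` S" using vV S f by (auto simp: bij_betw_def inj_on_def)
  moreover have "f v \<in> fst F'" using vV f by (auto simp: bij_betw_def)
  moreover have "\<forall>x\<in>S. {f x, f v} \<notin> snd F'" using v vV e S by (auto simp: undom_def)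
  ultimately show "v' \<in> undom F' (f ` S)" using v by (auto simp: undom_def)
qed

lemma cnt_iso:
  assumes "graph_iso F F'"
  shows "cnt s j F = cnt s j F'"
proof -
  obtain f where f: "bij_betw f (fst F) (fst F')"
    and e: "\<forall>u\<in>fst F. \<forall>w\<in>fst F. {u, w} \<in> snd F \<longleftrightarrow> {f u, f w} \<in> snd F'"
    using assms by (auto simp: graph_iso_def)
  define Fam where "Fam = {S. S \<subseteq> fst F \<and> card S = s \<and> card (undom F S) = j}"
  define Fam' where "Fam' = {S. S \<subseteq> fst F' \<and> card S = s \<and> card (undom F' S) = j}"
  have inj: "inj_on f (fst F)" using f by (auto simp: bij_betw_def)
  have cardS: "card (f ` S) = card S" if "S \<subseteq> fst F" for S
    using card_image[OF inj_on_subset[OF inj that]] .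
  have cardU: "card (undom F' (f ` S)) = card (undom F S)" if "S \<subseteq> fst F" for S
    unfolding undom_iso[OF f e that]
    by (rule card_image[OF inj_on_subset[OF inj]]) (auto simp: undom_def)
  have b: "bij_betw (image f) (Pow (fst F)) (Pow (fst F'))" using f by (rule bij_betw_Pow)
  have "bij_betw (image f) Fam Fam'"
  proof (rule bij_betw_subset[OF b])
    show "Fam \<subseteq> Pow (fst F)" by (auto simp: Fam_def)
    show "image f ` Fam = Fam'"
    proof (intro equalityI subsetI)
      fix S' assume "S' \<in> image f ` Fam"
      then obtain S where "S \<in> Fam" "S' = f ` S" by auto
      moreover have "f ` fst F = fst F'" using f by (simp add: bij_betw_def)
      ultimately show "S' \<in> Fam'" using cardS cardU by (auto simp: Fam_def Fam'_def) blast
    next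
      fix S' assume S': "S' \<in> Fam'"
      then have "S' \<in> Pow (fst F')" by (auto simp: Fam'_def)
      moreover have "image f ` Pow (fst F) = Pow (fst F')" using b by (simp add: bij_betw_def)
      ultimately obtain S where S: "S \<in> Pow (fst F)" "S' = f ` S" by (metis imageE)
      then have "S \<in> Fam" using S' cardS cardU by (auto simp: Fam_def Fam'_def)
      then show "S' \<in> image f ` Fam" using S by auto
    qed
  qed
  then show ?thesis unfolding cnt_def Fam_def[symmetric] Fam'_def[symmetric] by (rule bij_betw_same_card)
qed

lemma deck_sum:
  assumes "same_deck H G"
  shows "(\<Sum>w\<in>fst H. cnt s j (delete_vertex H w)) = (\<Sum>v\<in>fst G. cnt s j (delete_vertex G v))"
proof -
  obtain g where g: "bij_betw g (fst H) (fst G)"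
    and c: "\<forall>v\<in>fst H. graph_iso (delete_vertex H v) (delete_vertex G (g v))"
    using assms by (auto simp: same_deck_def)
  have "(\<Sum>w\<in>fst H. cnt s j (delete_vertex H w)) = (\<Sum>w\<in>fst H. cnt s j (delete_vertex G (g w)))"
    using c cnt_iso by (intro sum.cong) blast+
  also have "\<dots> = (\<Sum>v\<in>fst G. cnt s j (delete_vertex G v))"
    by (rule sum.reindex_bij_betw[OF g])
  finally show ?thesis .
qed


lemma alg1: fixes M a1 a2 b0 b1 b2 :: int
  assumes "a1 = M*b0 + b1" "(M-1)*a1 + 2*a2 = (M-1)*b1 + 2*b2"
  shows "2*b2 = 2*a2 + (M-1)*M*b0"
  using assms by algebra

lemma alg2: fixes M a1 a2 a3 b0 b1 b2 b3 :: int
  assumes "a1 = M*b0 + b1" "(M-1)*a1 + 2*a2 = (M-1)*b1 + 2*b2"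
    "(M-2)*a2 + 3*a3 = (M-2)*b2 + 3*b3"
  shows "6*a3 = 6*b3 + M*(M-1)*(M-2)*b0"
  using assms by algebra

lemma ineq1: fixes M h0 h2 g2 :: int
  assumes "2*h2 = 2*g2 + (M-1)*M*h0" "h2 \<le> M+1" "g2 \<ge> 0" "h0 \<ge> 1" "M \<ge> 11"
  shows False
proof -
  have "(M-1)*M*h0 - (M-1)*M = (M-1)*M*(h0-1)" by (simp add: algebra_simps)
  also have "\<dots> \<ge> 0" using assms by simp
  finally have a: "(M-1)*M*h0 \<ge> (M-1)*M" by simp
  have "(M-1)*M \<ge> 10*M" using assms by (intro mult_right_mono) auto
  then show False using a assms by linarith
qed

lemma ineq2: fixes M a3 b3 b0 :: int
  assumes "6*a3 = 6*b3 + M*(M-1)*(M-2)*b0" "2*a3 \<le> (M+2)*(M+1)" "b3 \<ge> 0" "b0 \<ge> 1" "M \<ge> 10"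
  shows False
proof -
  have "M*(M-1)*(M-2)*b0 - M*(M-1)*(M-2) = M*(M-1)*(M-2)*(b0-1)" by (simp add: algebra_simps)
  also have "\<dots> \<ge> 0" using assms by simp
  finally have a: "M*(M-1)*(M-2)*b0 \<ge> M*(M-1)*(M-2)" by simp
  have b: "M*(M-1)*(M-2) \<ge> M*(M-1)*8" using assms by (intro mult_left_mono) auto
  have c: "M*M \<ge> 10*M" using assms by (intro mult_right_mono) auto
  have d: "M*(M-1)*8 = 8*(M*M) - 8*M" by (simp add: algebra_simps)
  have e: "(M+2)*(M+1) = M*M + 3*M + 2" by (simp add: algebra_simps)
  have "6*a3 \<ge> M*(M-1)*(M-2)" using a assms by linarith
  then show False using b c d e assms by (smt (verit))
qed

lemma dom_iff: assumes "S \<subseteq> fst F" "finite (fst F)"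
  shows "dominating_set F S \<longleftrightarrow> card (undom F S) = 0"
proof -
  have "finite (undom F S)" using assms(2) undom_sub[of F S] finite_subset by blast
  then show ?thesis using assms(1) by (auto simp: dominating_set_def undom_def)
qed

lemma cnt0_pos: assumes "dominating_set F S" "card S = s" "finite (fst F)"
  shows "cnt s 0 F \<ge> 1"
proof -
  have S: "S \<subseteq> fst F" using assms by (simp add: dominating_set_def)
  have "S \<in> {S. S \<subseteq> fst F \<and> card S = s \<and> card (undom F S) = 0}"
    using S assms dom_iff[OF S assms(3)] by auto
  moreover have "finite {S. S \<subseteq> fst F \<and> card S = s \<and> card (undom F S) = 0}"
    using assms(3) by (auto intro: finite_subset[of _ "Pow (fst F)"])
  ultimately show ?thesis unfolding cnt_def
    by (metis One_nat_def Suc_leI card_gt_0_iff empty_iff)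
qed

lemma cnt0_zero: assumes "cnt s 0 F = 0" "finite (fst F)" "dominating_set F S" "card S = s"
  shows False
  using cnt0_pos[OF assms(3,4,2)] assms(1) by simp

theorem theorem12:
  fixes G :: "'a graph" and H :: "'b graph"
  assumes "in_class_H G"
    and "simple_graph H"
    and "same_deck H G"
  shows "in_class_H H"
proof -
  have finG: "finite (fst G)" and nG: "card (fst G) \<ge> 12" and dG: "domination_number G = 2"
    using assms(1) by (auto simp: in_class_H_def simple_graph_def)
  have finH: "finite (fst H)" using assms(2) by (simp add: simple_graph_def)
  obtain g where g: "bij_betw g (fst H) (fst G)" using assms(3) by (auto simp: same_deck_def)
  define n where "n = card (fst H)"
  have nGH: "card (fst G) = n" using bij_betw_same_card[OF g] n_def by simp
  have n12: "n \<ge> 12" using nG nGH by simp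
  let ?P = "\<lambda>F k. \<exists>S. dominating_set F S \<and> card S = k"
  have exG: "?P G (card (fst G))" by (rule exI[of _ "fst G"]) (simp add: dominating_set_def)
  have G2: "?P G 2" using LeastI[of "?P G", OF exG] dG by (simp add: domination_number_def)
  have G1: "\<not> ?P G 1" using not_less_Least[of 1 "?P G"] dG by (simp add: domination_number_def)
  have KH: "(\<Sum>w\<in>fst H. cnt s j (delete_vertex H w)) = (n - s - j) * cnt s j H + (j+1) * cnt s (Suc j) H" for s j
    using kelly[OF finH] n_def by simp
  have KG: "(\<Sum>w\<in>fst G. cnt s j (delete_vertex G w)) = (n - s - j) * cnt s j G + (j+1) * cnt s (Suc j) G" for s j
    using kelly[OF finG] nGH by simp
  have E: "(n - s - j) * cnt s j H + (j+1) * cnt s (Suc j) H = (n - s - j) * cnt s j G + (j+1) * cnt s (Suc j) G" for s j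
    using KH[of s j] KG[of s j] deck_sum[OF assms(3)] by simp
  have g10: "cnt 1 0 G = 0"
  proof (rule ccontr)
    assume "cnt 1 0 G \<noteq> 0"
    then have "{S. S \<subseteq> fst G \<and> card S = 1 \<and> card (undom G S) = 0} \<noteq> {}"
      unfolding cnt_def by (metis card.empty)
    then obtain S where "S \<subseteq> fst G" "card S = 1" "card (undom G S) = 0" by auto
    then show False using G1 dom_iff[OF _ finG] by blast
  qed
  have g20: "cnt 2 0 G \<ge> 1" using G2 cnt0_pos finG by blast
  have h10: "cnt 1 0 H = 0"
  proof (rule ccontr)
    assume "cnt 1 0 H \<noteq> 0"
    then have h0: "int (cnt 1 0 H) \<ge> 1" by simp
    have e0: "int (cnt 1 1 G) = (int n - 1) * int (cnt 1 0 H) + int (cnt 1 1 H)"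
    proof -
      have "(n - 1) * cnt 1 0 H + cnt 1 1 H = cnt 1 1 G" using E[of 1 0] g10 by simp
      then have "int ((n - 1) * cnt 1 0 H + cnt 1 1 H) = int (cnt 1 1 G)" by simp
      then show ?thesis using n12 by (simp add: of_nat_diff)
    qed
    have e1: "(int n - 1 - 1) * int (cnt 1 1 G) + 2 * int (cnt 1 2 G)
        = (int n - 1 - 1) * int (cnt 1 1 H) + 2 * int (cnt 1 2 H)"
    proof -
      have "(n - 1 - 1) * cnt 1 1 G + 2 * cnt 1 2 G = (n - 1 - 1) * cnt 1 1 H + 2 * cnt 1 2 H"
        using E[of 1 1] by (simp add: numeral_2_eq_2)
      then have "int ((n - 1 - 1) * cnt 1 1 G + 2 * cnt 1 2 G) = int ((n - 1 - 1) * cnt 1 1 H + 2 * cnt 1 2 H)"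
        by simp
      then show ?thesis using n12 by (simp add: of_nat_diff)
    qed
    have a: "2 * int (cnt 1 2 H) = 2 * int (cnt 1 2 G) + (int n - 1 - 1) * (int n - 1) * int (cnt 1 0 H)"
      by (rule alg1[OF e0 e1])
    have "cnt 1 2 H \<le> n" using cnt_le[OF finH, of 1 2] n_def by simp
    then show False using ineq1[OF a _ _ h0] n12 by simp
  qed
  have h20: "cnt 2 0 H \<noteq> 0"
  proof
    assume h0: "cnt 2 0 H = 0"
    have e0: "int (cnt 2 1 H) = (int n - 2) * int (cnt 2 0 G) + int (cnt 2 1 G)"
    proof -
      have "(n - 2) * cnt 2 0 G + cnt 2 1 G = cnt 2 1 H" using E[of 2 0] h0 by simp
      then have "int ((n - 2) * cnt 2 0 G + cnt 2 1 G) = int (cnt 2 1 H)" by simp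
      then show ?thesis using n12 by (simp add: of_nat_diff)
    qed
    have e1: "(int n - 2 - 1) * int (cnt 2 1 H) + 2 * int (cnt 2 2 H)
        = (int n - 2 - 1) * int (cnt 2 1 G) + 2 * int (cnt 2 2 G)"
    proof -
      have "(n - 2 - 1) * cnt 2 1 H + 2 * cnt 2 2 H = (n - 2 - 1) * cnt 2 1 G + 2 * cnt 2 2 G"
        using E[of 2 1] by (simp add: numeral_2_eq_2)
      then have "int ((n - 2 - 1) * cnt 2 1 H + 2 * cnt 2 2 H) = int ((n - 2 - 1) * cnt 2 1 G + 2 * cnt 2 2 G)"
        by simp
      then show ?thesis using n12 by (simp add: of_nat_diff)
    qed
    have e2: "(int n - 2 - 2) * int (cnt 2 2 H) + 3 * int (cnt 2 3 H)
        = (int n - 2 - 2) * int (cnt 2 2 G) + 3 * int (cnt 2 3 G)"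
    proof -
      have "(n - 2 - 2) * cnt 2 2 H + 3 * cnt 2 3 H = (n - 2 - 2) * cnt 2 2 G + 3 * cnt 2 3 G"
        using E[of 2 2] by (simp add: numeral_3_eq_3 numeral_2_eq_2)
      then have "int ((n - 2 - 2) * cnt 2 2 H + 3 * cnt 2 3 H) = int ((n - 2 - 2) * cnt 2 2 G + 3 * cnt 2 3 G)"
        by simp
      then show ?thesis using n12 by (simp add: of_nat_diff)
    qed
    have a: "6 * int (cnt 2 3 H) = 6 * int (cnt 2 3 G) + (int n - 2) * (int n - 2 - 1) * (int n - 2 - 2) * int (cnt 2 0 G)"
      by (rule alg2[OF e0 e1 e2])
    have c: "cnt 2 3 H \<le> n choose 2" using cnt_le[OF finH, of 2 3] n_def by simp
    have "2 * (n choose 2) \<le> n * (n - 1)" unfolding choose_two by (rule times_div_less_eq_dividend)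
    then have "2 * cnt 2 3 H \<le> n * (n - 1)" using c by linarith
    then have "int (2 * cnt 2 3 H) \<le> int (n * (n - 1))" by (simp only: of_nat_le_iff)
    then have "2 * int (cnt 2 3 H) \<le> int n * (int n - 1)" using n12 by (simp add: of_nat_diff)
    then have b: "2 * int (cnt 2 3 H) \<le> (int n - 2 + 2) * (int n - 2 + 1)" by simp
    show False using ineq2[OF a b _ _] g20 n12 by simp
  qed
  then obtain S where S: "S \<subseteq> fst H" "card S = 2" "card (undom H S) = 0"
    unfolding cnt_def by (metis (mono_tags, lifting) card.empty empty_Collect_eq)
  have HS: "dominating_set H S" using S dom_iff[OF _ finH] by blast
  have "domination_number H = 2"
    unfolding domination_number_def
  proof (rule Least_equality)
    show "?P H 2" using HS S by blast
  next
    fix k assume "?P H k"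
    then obtain T where T: "dominating_set H T" "card T = k" by blast
    have TH: "T \<subseteq> fst H" using T by (simp add: dominating_set_def)
    show "2 \<le> k"
    proof (rule ccontr)
      assume "\<not> 2 \<le> k"
      then have "k = 0 \<or> k = 1" by auto
      then show False
      proof
        assume "k = 0"
        then have "T = {}" using T TH finH finite_subset by (metis card_0_eq)
        moreover have "fst H \<noteq> {}" using n12 n_def by auto
        ultimately show False using T by (auto simp: dominating_set_def)
      next
        assume "k = 1"
        then show False using cnt0_zero[OF h10 finH T(1)] T by simp
      qed
    qed
  qed
  then show ?thesis using assms(2) n12 n_def by (simp add: in_class_H_def)
qed

end
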